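(* Let $G$ be a countable graph with maximal degree $\le\mathrm{D}$ and $H=\mathcal{A}+V$ on $\ell^2(G)$, with $\mathcal{A}$ the adjacency matrix and $V$ a bounded real potential. Fix $o\in G$, let $|x|=d(x,o)$ and let $x^m$ denote multiplication by $|x|^m$. Let $m\in\mathbb{N}$ and $\psi\in\ell^2(G)$ with $\|x^m\psi\|<\infty$, and set $x^m(t)\psi=e^{\mathrm{i}tH}x^me^{-\mathrm{i}tH}\psi$ for $t\ge0$. Then for $t\ge0$, $\lim_{s\to t}x^m(s)\psi=x^m(t)\psi$ in $\ell^2(G)$, and $t\mapsto x^m(t)\psi$ is differentiable with $$\frac{\mathrm{d}}{\mathrm{d}t}x^m(t)\psi=\mathrm{i}e^{\mathrm{i}tH}[\mathcal{A},x^m]e^{-\mathrm{i}tH}\psi.$$ *)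

theory Defs
  imports "HOL-Analysis.Analysis"
begin

definition is_l2 :: "('v \<Rightarrow> complex) \<Rightarrow> bool" where
  "is_l2 f \<longleftrightarrow> (\<lambda>x. (cmod (f x))^2) summable_on UNIV"

definition l2norm :: "('v \<Rightarrow> complex) \<Rightarrow> real" where
  "l2norm f = sqrt (infsum (\<lambda>x. (cmod (f x))^2) UNIV)"

definition adj_op :: "('v \<Rightarrow> 'v \<Rightarrow> bool) \<Rightarrow> ('v \<Rightarrow> complex) \<Rightarrow> ('v \<Rightarrow> complex)" where
  "adj_op E \<psi> = (\<lambda>x. \<Sum>y\<in>{y. E x y}. \<psi> y)"

definition ham :: "('v \<Rightarrow> 'v \<Rightarrow> bool) \<Rightarrow> ('v \<Rightarrow> real) \<Rightarrow> ('v \<Rightarrow> complex) \<Rightarrow> ('v \<Rightarrow> complex)" where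
  "ham E V \<psi> = (\<lambda>x. adj_op E \<psi> x + complex_of_real (V x) * \<psi> x)"

definition gdist :: "('v \<Rightarrow> 'v \<Rightarrow> bool) \<Rightarrow> 'v \<Rightarrow> 'v \<Rightarrow> nat" where
  "gdist E x y = (LEAST n. (E ^^ n) x y)"

definition xpow :: "('v \<Rightarrow> 'v \<Rightarrow> bool) \<Rightarrow> 'v \<Rightarrow> nat \<Rightarrow> ('v \<Rightarrow> complex) \<Rightarrow> ('v \<Rightarrow> complex)" where
  "xpow E p m \<psi> = (\<lambda>x. (of_nat (gdist E x p))^m * \<psi> x)"

definition evol :: "('v \<Rightarrow> 'v \<Rightarrow> bool) \<Rightarrow> ('v \<Rightarrow> real) \<Rightarrow> real \<Rightarrow> ('v \<Rightarrow> complex) \<Rightarrow> ('v \<Rightarrow> complex)" where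
  "evol E V t \<psi> = (\<lambda>x. \<Sum>n. ((\<i> * complex_of_real t)^n / of_nat (fact n)) * ((ham E V ^^ n) \<psi>) x)"

definition xt :: "('v \<Rightarrow> 'v \<Rightarrow> bool) \<Rightarrow> ('v \<Rightarrow> real) \<Rightarrow> 'v \<Rightarrow> nat \<Rightarrow> real \<Rightarrow> ('v \<Rightarrow> complex) \<Rightarrow> ('v \<Rightarrow> complex)" where
  "xt E V p m t \<psi> = evol E V t (xpow E p m (evol E V (-t) \<psi>))"

definition comm_Ax :: "('v \<Rightarrow> 'v \<Rightarrow> bool) \<Rightarrow> 'v \<Rightarrow> nat \<Rightarrow> ('v \<Rightarrow> complex) \<Rightarrow> ('v \<Rightarrow> complex)" where
  "comm_Ax E p m \<psi> = (\<lambda>x. adj_op E (xpow E p m \<psi>) x - xpow E p m (adj_op E \<psi>) x)"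

end

theory Submission
  imports Defs
begin


lemma l2norm_nonneg: "0 \<le> l2norm f"
  unfolding l2norm_def by (simp add: infsum_nonneg)

lemma l2_fin_le:
  assumes "is_l2 f" "finite S"
  shows "L2_set (\<lambda>x. cmod (f x)) S \<le> l2norm f"
proof -
  have "(\<Sum>x\<in>S. (cmod (f x))^2) \<le> infsum (\<lambda>x. (cmod (f x))^2) UNIV"
    by (rule finite_sum_le_infsum) (use assms in \<open>auto simp: is_l2_def\<close>)
  then show ?thesis unfolding L2_set_def l2norm_def by (rule real_sqrt_le_mono)
qed

lemma l2_fin_bound:
  assumes B: "0 \<le> B" and H: "\<And>S. finite S \<Longrightarrow> L2_set (\<lambda>x. cmod (f x)) S \<le> B"
  shows "is_l2 f \<and> l2norm f \<le> B"
proof -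
  have S: "(\<Sum>x\<in>S. (cmod (f x))^2) \<le> B^2" if "finite S" for S
  proof -
    have "sqrt (\<Sum>x\<in>S. (cmod (f x))^2) \<le> B" using H[OF that] by (simp add: L2_set_def)
    moreover have "0 \<le> (\<Sum>x\<in>S. (cmod (f x))^2)" by (simp add: sum_nonneg)
    ultimately show ?thesis
      by (metis power_mono real_sqrt_ge_zero real_sqrt_pow2)
  qed
  have sm: "is_l2 f" unfolding is_l2_def
    by (rule nonneg_bdd_above_summable_on) (auto intro!: bdd_aboveI[where M="B^2"] S)
  have "infsum (\<lambda>x. (cmod (f x))^2) UNIV \<le> B^2"
    by (rule infsum_le_finite_sums) (use sm S in \<open>auto simp: is_l2_def\<close>)
  then have "l2norm f \<le> sqrt (B^2)" unfolding l2norm_def by (rule real_sqrt_le_mono)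
  with B sm show ?thesis by simp
qed

lemma l2_point: "is_l2 f \<Longrightarrow> cmod (f x) \<le> l2norm f"
  using l2_fin_le[of f "{x}"] by simp

lemma l2_dom:
  assumes f: "is_l2 f" and K: "0 \<le> K" and le: "\<And>x. cmod (g x) \<le> K * cmod (f x)"
  shows "is_l2 g \<and> l2norm g \<le> K * l2norm f"
proof (rule l2_fin_bound)
  show "0 \<le> K * l2norm f" using K l2norm_nonneg[of f] by simp
  fix S :: "'a set" assume S: "finite S"
  have "L2_set (\<lambda>x. cmod (g x)) S \<le> L2_set (\<lambda>x. K * cmod (f x)) S"
    by (rule L2_set_mono) (use le in auto)
  also have "\<dots> = K * L2_set (\<lambda>x. cmod (f x)) S" using L2_set_right_distrib[OF K, of "\<lambda>x. cmod (f x)" S] by simp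
  also have "\<dots> \<le> K * l2norm f" using l2_fin_le[OF f S] K by (simp add: mult_left_mono)
  finally show "L2_set (\<lambda>x. cmod (g x)) S \<le> K * l2norm f" .
qed

lemma l2_add:
  assumes f: "is_l2 f" and g: "is_l2 g"
  shows "is_l2 (\<lambda>x. f x + g x) \<and> l2norm (\<lambda>x. f x + g x) \<le> l2norm f + l2norm g"
proof (rule l2_fin_bound)
  show "0 \<le> l2norm f + l2norm g" using l2norm_nonneg[of f] l2norm_nonneg[of g] by simp
  fix S :: "'a set" assume S: "finite S"
  have "L2_set (\<lambda>x. cmod (f x + g x)) S \<le> L2_set (\<lambda>x. cmod (f x) + cmod (g x)) S"
    by (rule L2_set_mono) (auto intro: norm_triangle_ineq)
  also have "\<dots> \<le> L2_set (\<lambda>x. cmod (f x)) S + L2_set (\<lambda>x. cmod (g x)) S"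
    by (rule L2_set_triangle_ineq)
  also have "\<dots> \<le> l2norm f + l2norm g" using l2_fin_le[OF f S] l2_fin_le[OF g S] by simp
  finally show "L2_set (\<lambda>x. cmod (f x + g x)) S \<le> l2norm f + l2norm g" .
qed

lemma l2_zero: "is_l2 (\<lambda>_. 0)" "l2norm (\<lambda>_. 0) = 0"
  by (auto simp: is_l2_def l2norm_def)

lemma l2_cmult:
  assumes f: "is_l2 f"
  shows "is_l2 (\<lambda>x. c * f x) \<and> l2norm (\<lambda>x. c * f x) = cmod c * l2norm f"
proof -
  have 1: "is_l2 (\<lambda>x. c * f x) \<and> l2norm (\<lambda>x. c * f x) \<le> cmod c * l2norm f"
    by (rule l2_dom[OF f]) (auto simp: norm_mult)
  show ?thesis
  proof (cases "c = 0")
    case True then show ?thesis using l2_zero by simp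
  next
    case False
    have "is_l2 (\<lambda>x. inverse c * (c * f x)) \<and> l2norm (\<lambda>x. inverse c * (c * f x)) \<le> cmod (inverse c) * l2norm (\<lambda>x. c * f x)"
      by (rule l2_dom[OF 1[THEN conjunct1]]) (auto simp: norm_mult)
    moreover have "(\<lambda>x. inverse c * (c * f x)) = f" using False by auto
    ultimately have "l2norm f \<le> inverse (cmod c) * l2norm (\<lambda>x. c * f x)" by (simp add: norm_inverse)
    then have "cmod c * l2norm f \<le> l2norm (\<lambda>x. c * f x)" using False
      by (simp add: field_simps)
    with 1 show ?thesis by simp
  qed
qed

lemma l2_neg: "is_l2 f \<Longrightarrow> is_l2 (\<lambda>x. - f x)"
  using l2_cmult[of f "-1"] by simp

lemma l2_diff: "is_l2 f \<Longrightarrow> is_l2 g \<Longrightarrow> is_l2 (\<lambda>x. f x - g x)"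
  using l2_add[of f "\<lambda>x. - g x"] l2_neg[of g] by simp

lemma l2norm_eq_0: "is_l2 f \<Longrightarrow> l2norm f = 0 \<Longrightarrow> f = (\<lambda>_. 0)"
  using l2_point[of f] by fastforce

typedef 'v lv = "{f :: 'v \<Rightarrow> complex. is_l2 f}" morphisms lvec Lvec
  using l2_zero by blast

setup_lifting type_definition_lv

instantiation lv :: (type) real_normed_vector
begin
lift_definition zero_lv :: "'a lv" is "\<lambda>_. 0" by (simp add: l2_zero)
lift_definition plus_lv :: "'a lv \<Rightarrow> 'a lv \<Rightarrow> 'a lv" is "\<lambda>f g x. f x + g x" by (simp add: l2_add)
lift_definition uminus_lv :: "'a lv \<Rightarrow> 'a lv" is "\<lambda>f x. - f x" by (simp add: l2_neg)
lift_definition minus_lv :: "'a lv \<Rightarrow> 'a lv \<Rightarrow> 'a lv" is "\<lambda>f g x. f x - g x" by (simp add: l2_diff)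
lift_definition scaleR_lv :: "real \<Rightarrow> 'a lv \<Rightarrow> 'a lv" is "\<lambda>r f x. complex_of_real r * f x" by (simp add: l2_cmult)
lift_definition norm_lv :: "'a lv \<Rightarrow> real" is l2norm .
definition dist_lv :: "'a lv \<Rightarrow> 'a lv \<Rightarrow> real" where "dist_lv a b = norm (a - b)"
definition sgn_lv :: "'a lv \<Rightarrow> 'a lv" where "sgn_lv x = scaleR (inverse (norm x)) x"
definition uniformity_lv :: "('a lv \<times> 'a lv) filter" where
  "uniformity_lv = (INF e\<in>{0 <..}. principal {(x, y). dist x y < e})"
definition open_lv :: "'a lv set \<Rightarrow> bool" where
  "open_lv S = (\<forall>x\<in>S. \<forall>\<^sub>F (x', y) in uniformity. x' = x \<longrightarrow> y \<in> S)"
instance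
proof
  fix a b c :: "'a lv" and r s :: real
  show "a + b + c = a + (b + c)" by transfer (auto simp: algebra_simps)
  show "a + b = b + a" by transfer (auto simp: algebra_simps)
  show "0 + a = a" by transfer auto
  show "- a + a = 0" by transfer auto
  show "a - b = a + - b" by transfer auto
  show "r *\<^sub>R (a + b) = r *\<^sub>R a + r *\<^sub>R b" by transfer (auto simp: algebra_simps)
  show "(r + s) *\<^sub>R a = r *\<^sub>R a + s *\<^sub>R a" by transfer (auto simp: algebra_simps)
  show "r *\<^sub>R s *\<^sub>R a = (r * s) *\<^sub>R a" by transfer (auto simp: algebra_simps)
  show "1 *\<^sub>R a = a" by transfer auto
  show "dist a b = norm (a - b)" by (simp add: dist_lv_def)
  show "sgn a = inverse (norm a) *\<^sub>R a" by (simp add: sgn_lv_def)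
  show "(norm a = 0) = (a = 0)" by transfer (auto simp: l2norm_eq_0 l2_zero)
  show "norm (a + b) \<le> norm a + norm b" by transfer (simp add: l2_add)
  show "norm (r *\<^sub>R a) = \<bar>r\<bar> * norm a" by transfer (simp add: l2_cmult)
qed (simp_all add: uniformity_lv_def open_lv_def)
end


lemmas vec_ops = zero_lv.rep_eq plus_lv.rep_eq uminus_lv.rep_eq minus_lv.rep_eq scaleR_lv.rep_eq

lemma norm_lv_eq: "norm a = l2norm (lvec a)" by (simp add: norm_lv.rep_eq)
lemma vec_l2[simp]: "is_l2 (lvec a)" using lvec by auto
lemma vec_point: "cmod (lvec a x) \<le> norm a"
  by (simp add: norm_lv_eq l2_point)
lemma lvec_Lvec: "is_l2 f \<Longrightarrow> lvec (Lvec f) = f" by (simp add: Lvec_inverse)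

lemma vec_eval_bl: "bounded_linear (\<lambda>a. lvec a x)"
proof (rule bounded_linear_intro[where K=1])
  fix a b :: "'a lv" and r :: real
  show "lvec (a + b) x = lvec a x + lvec b x" by (simp add: vec_ops)
  show "lvec (r *\<^sub>R a) x = r *\<^sub>R lvec a x" by (simp add: vec_ops scaleR_conv_of_real)
  show "norm (lvec a x) \<le> norm a * 1" using vec_point by simp
qed

instance lv :: (type) banach
proof
  fix X :: "nat \<Rightarrow> 'a lv" assume C: "Cauchy X"
  have pc: "Cauchy (\<lambda>n. lvec (X n) x)" for x
  proof (rule CauchyI)
    fix e :: real assume "0 < e"
    from CauchyD[OF C this] obtain M where M: "\<forall>m\<ge>M. \<forall>n\<ge>M. norm (X m - X n) < e" by blast
    have "norm (lvec (X m) x - lvec (X n) x) \<le> norm (X m - X n)" for m n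
      using vec_point[of "X m - X n" x] by (simp add: vec_ops)
    with M show "\<exists>M. \<forall>m\<ge>M. \<forall>n\<ge>M. norm (lvec (X m) x - lvec (X n) x) < e"
      by (meson le_less_trans)
  qed
  define g where "g = (\<lambda>x. lim (\<lambda>n. lvec (X n) x))"
  have g: "(\<lambda>n. lvec (X n) x) \<longlonglongrightarrow> g x" for x
    unfolding g_def using pc[of x] by (simp add: Cauchy_convergent_iff convergent_LIMSEQ_iff)
  have key: "\<exists>N. \<forall>n\<ge>N. is_l2 (\<lambda>x. lvec (X n) x - g x) \<and> l2norm (\<lambda>x. lvec (X n) x - g x) \<le> e"
    if e: "0 < e" for e
  proof -
    from CauchyD[OF C e] obtain N where N: "\<forall>m\<ge>N. \<forall>n\<ge>N. norm (X m - X n) < e" by blast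
    have "is_l2 (\<lambda>x. lvec (X n) x - g x) \<and> l2norm (\<lambda>x. lvec (X n) x - g x) \<le> e" if n: "n \<ge> N" for n
    proof (rule l2_fin_bound)
      show "0 \<le> e" using e by simp
      fix S :: "'a set" assume S: "finite S"
      have lim: "(\<lambda>k. L2_set (\<lambda>x. cmod (lvec (X n) x - lvec (X k) x)) S) \<longlonglongrightarrow> L2_set (\<lambda>x. cmod (lvec (X n) x - g x)) S"
        unfolding L2_set_def by (intro tendsto_intros g)
      have ev: "\<forall>\<^sub>F k in sequentially. L2_set (\<lambda>x. cmod (lvec (X n) x - lvec (X k) x)) S \<le> e"
      proof (rule eventually_sequentiallyI[of N])
        fix k assume k: "N \<le> k"
        have "L2_set (\<lambda>x. cmod (lvec (X n) x - lvec (X k) x)) S = L2_set (\<lambda>x. cmod (lvec (X n - X k) x)) S"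
          by (simp add: vec_ops)
        also have "\<dots> \<le> norm (X n - X k)" using l2_fin_le[OF vec_l2 S] by (simp add: norm_lv_eq)
        also have "\<dots> \<le> e" using N n k by (simp add: less_imp_le)
        finally show "L2_set (\<lambda>x. cmod (lvec (X n) x - lvec (X k) x)) S \<le> e" .
      qed
      show "L2_set (\<lambda>x. cmod (lvec (X n) x - g x)) S \<le> e"
        by (rule tendsto_upperbound[OF lim ev]) simp
    qed
    then show ?thesis by blast
  qed
  obtain N1 where N1: "\<forall>n\<ge>N1. is_l2 (\<lambda>x. lvec (X n) x - g x)" using key[of 1] by auto
  have "is_l2 (\<lambda>x. lvec (X N1) x - (lvec (X N1) x - g x))"
    by (rule l2_diff) (use N1 in auto)
  then have gl2: "is_l2 g" by simp
  have "X \<longlonglongrightarrow> Lvec g"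
  proof (rule LIMSEQ_I)
    fix r :: real assume r: "0 < r"
    obtain N where N: "\<forall>n\<ge>N. is_l2 (\<lambda>x. lvec (X n) x - g x) \<and> l2norm (\<lambda>x. lvec (X n) x - g x) \<le> r/2"
      using key[of "r/2"] r by auto
    have "norm (X n - Lvec g) < r" if "n \<ge> N" for n
    proof -
      have "norm (X n - Lvec g) = l2norm (\<lambda>x. lvec (X n) x - g x)"
        by (simp add: norm_lv_eq vec_ops lvec_Lvec[OF gl2])
      also have "\<dots> \<le> r/2" using N that by auto
      finally show ?thesis using r by simp
    qed
    then show "\<exists>N. \<forall>n\<ge>N. norm (X n - Lvec g) < r" by blast
  qed
  then show "convergent X" by (auto simp: convergent_def)
qed



definition unitv :: "'a \<Rightarrow> 'a \<Rightarrow> complex" where "unitv a = (\<lambda>x. if x = a then 1 else 0)"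

lemma unitv_l2: "is_l2 (unitv a) \<and> l2norm (unitv a) \<le> 1"
proof (rule l2_fin_bound)
  fix S :: "'a set" assume "finite S"
  have e: "(\<lambda>x. (cmod (unitv a x))^2) = (\<lambda>x. if x = a then 1 else 0)" by (auto simp: unitv_def fun_eq_iff)
  have "(\<Sum>x\<in>S. (cmod (unitv a x))^2) = (if a \<in> S then 1 else 0)"
    unfolding e using \<open>finite S\<close> by (simp add: sum.delta)
  then show "L2_set (\<lambda>x. cmod (unitv a x)) S \<le> 1" by (simp add: L2_set_def)
qed simp

lemma unitv_norm: "norm (Lvec (unitv a)) = 1"
proof -
  have "l2norm (unitv a) \<ge> 1" using l2_point[of "unitv a" a] unitv_l2[of a, THEN conjunct1] by (simp add: unitv_def)
  then show ?thesis using unitv_l2[of a] by (simp add: norm_lv_eq lvec_Lvec)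
qed

typedef 'v bop = "UNIV :: ('v lv \<Rightarrow>\<^sub>L 'v lv) set" morphisms blf Bop ..

setup_lifting type_definition_bop

instantiation bop :: (type) real_normed_algebra_1
begin
lift_definition zero_bop :: "'a bop" is 0 .
lift_definition one_bop :: "'a bop" is id_blinfun .
lift_definition plus_bop :: "'a bop \<Rightarrow> 'a bop \<Rightarrow> 'a bop" is "(+)" .
lift_definition uminus_bop :: "'a bop \<Rightarrow> 'a bop" is uminus .
lift_definition minus_bop :: "'a bop \<Rightarrow> 'a bop \<Rightarrow> 'a bop" is "(-)" .
lift_definition times_bop :: "'a bop \<Rightarrow> 'a bop \<Rightarrow> 'a bop" is "(o\<^sub>L)" .
lift_definition scaleR_bop :: "real \<Rightarrow> 'a bop \<Rightarrow> 'a bop" is scaleR .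
lift_definition norm_bop :: "'a bop \<Rightarrow> real" is norm .
definition dist_bop :: "'a bop \<Rightarrow> 'a bop \<Rightarrow> real" where "dist_bop a b = norm (a - b)"
definition sgn_bop :: "'a bop \<Rightarrow> 'a bop" where "sgn_bop x = scaleR (inverse (norm x)) x"
definition uniformity_bop :: "('a bop \<times> 'a bop) filter" where
  "uniformity_bop = (INF e\<in>{0 <..}. principal {(x, y). dist x y < e})"
definition open_bop :: "'a bop set \<Rightarrow> bool" where
  "open_bop S = (\<forall>x\<in>S. \<forall>\<^sub>F (x', y) in uniformity. x' = x \<longrightarrow> y \<in> S)"
instance
proof
  fix a b c :: "'a bop" and r s :: real
  show "a + b + c = a + (b + c)" by transfer (auto simp: algebra_simps)
  show "a + b = b + a" by transfer (auto simp: algebra_simps)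
  show "0 + a = a" by transfer auto
  show "- a + a = 0" by transfer auto
  show "a - b = a + - b" by transfer auto
  show "r *\<^sub>R (a + b) = r *\<^sub>R a + r *\<^sub>R b" by transfer (auto simp: algebra_simps)
  show "(r + s) *\<^sub>R a = r *\<^sub>R a + s *\<^sub>R a" by transfer (auto simp: algebra_simps)
  show "r *\<^sub>R s *\<^sub>R a = (r * s) *\<^sub>R a" by transfer (auto simp: algebra_simps)
  show "1 *\<^sub>R a = a" by transfer auto
  show "dist a b = norm (a - b)" by (simp add: dist_bop_def)
  show "sgn a = inverse (norm a) *\<^sub>R a" by (simp add: sgn_bop_def)
  show "(norm a = 0) = (a = 0)" by transfer auto
  show "norm (a + b) \<le> norm a + norm b" by transfer (simp add: norm_triangle_ineq)
  show "norm (r *\<^sub>R a) = \<bar>r\<bar> * norm a" by transfer simp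
  show "a * b * c = a * (b * c)" by transfer (auto intro!: blinfun_eqI)
  show "(a + b) * c = a * c + b * c" by transfer (auto intro!: blinfun_eqI simp: blinfun.bilinear_simps)
  show "a * (b + c) = a * b + a * c" by transfer (auto intro!: blinfun_eqI simp: blinfun.bilinear_simps)
  show "r *\<^sub>R a * b = r *\<^sub>R (a * b)" by transfer (auto intro!: blinfun_eqI simp: blinfun.bilinear_simps)
  show "a * r *\<^sub>R b = r *\<^sub>R (a * b)" by transfer (auto intro!: blinfun_eqI simp: blinfun.bilinear_simps)
  show "1 * a = a" by transfer (auto intro!: blinfun_eqI)
  show "a * 1 = a" by transfer (auto intro!: blinfun_eqI)
  show "norm (a * b) \<le> norm a * norm b" by transfer (rule norm_blinfun_compose)
  show "norm (1::'a bop) = 1"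
  proof transfer
    have "norm (id_blinfun :: 'a lv \<Rightarrow>\<^sub>L 'a lv) = 1"
      by (rule norm_blinfun_eqI[where x="Lvec (unitv undefined)"]) (auto simp: unitv_norm)
    then show "norm (id_blinfun :: 'a lv \<Rightarrow>\<^sub>L 'a lv) = 1" .
  qed
  show "(0::'a bop) \<noteq> 1"
  proof transfer
    have "blinfun_apply (0 :: 'a lv \<Rightarrow>\<^sub>L 'a lv) (Lvec (unitv undefined)) \<noteq> blinfun_apply id_blinfun (Lvec (unitv undefined))"
      using unitv_norm[of undefined] by (metis blinfun.zero_left blinfun_apply_id_blinfun norm_zero zero_neq_one)
    then show "(0 :: 'a lv \<Rightarrow>\<^sub>L 'a lv) \<noteq> id_blinfun" by metis
  qed
qed (simp_all add: uniformity_bop_def open_bop_def)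
end

lemma norm_blf: "norm (blf a) = norm a" by (simp add: norm_bop.rep_eq)
lemma blf_diff: "blf (a - b) = blf a - blf b" by (simp add: minus_bop.rep_eq)

instance bop :: (type) banach
proof
  fix X :: "nat \<Rightarrow> 'a bop" assume C: "Cauchy X"
  have "Cauchy (\<lambda>n. blf (X n))"
  proof (rule CauchyI)
    fix e :: real assume "0 < e"
    from CauchyD[OF C this] show "\<exists>M. \<forall>m\<ge>M. \<forall>n\<ge>M. norm (blf (X m) - blf (X n)) < e"
      by (simp add: norm_blf flip: blf_diff)
  qed
  then obtain L where L: "(\<lambda>n. blf (X n)) \<longlonglongrightarrow> L" by (auto simp: Cauchy_convergent_iff convergent_def)
  have "X \<longlonglongrightarrow> Bop L"
  proof (rule LIMSEQ_I)
    fix r :: real assume "0 < r"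
    from LIMSEQ_D[OF L this] show "\<exists>N. \<forall>n\<ge>N. norm (X n - Bop L) < r"
      by (simp add: norm_blf[symmetric] blf_diff Bop_inverse)
  qed
  then show "convergent X" by (auto simp: convergent_def)
qed

definition app :: "'a bop \<Rightarrow> 'a lv \<Rightarrow> 'a lv" where "app B u = blinfun_apply (blf B) u"

lemma app_mult: "app (A * B) u = app A (app B u)" by (simp add: app_def times_bop.rep_eq)
lemma app_one: "app 1 u = u" by (simp add: app_def one_bop.rep_eq)
lemma app_power: "app (A ^ n) u = (app A ^^ n) u"
  by (induction n arbitrary: u) (simp_all add: app_one app_mult)
lemma app_uminus: "app (- A) u = - app A u" by (simp add: app_def uminus_bop.rep_eq uminus_blinfun.rep_eq)

lemma bilinear_app: "bounded_bilinear app"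
proof
  fix a a' :: "'a bop" and b b' :: "'a lv" and r :: real
  show "app (a + a') b = app a b + app a' b" by (simp add: app_def plus_bop.rep_eq blinfun.bilinear_simps)
  show "app a (b + b') = app a b + app a b'" by (simp add: app_def blinfun.bilinear_simps)
  show "app (r *\<^sub>R a) b = r *\<^sub>R app a b" by (simp add: app_def scaleR_bop.rep_eq blinfun.bilinear_simps)
  show "app a (r *\<^sub>R b) = r *\<^sub>R app a b" by (simp add: app_def blinfun.bilinear_simps)
  show "\<exists>K. \<forall>a b. norm (app a b) \<le> norm a * norm b * K"
    by (auto intro!: exI[where x=1] simp: app_def norm_blf[symmetric] norm_blinfun)
qed

interpretation app: bounded_bilinear app by (rule bilinear_app)



definition pbnd :: "(('a \<Rightarrow> complex) \<Rightarrow> ('a \<Rightarrow> complex)) \<Rightarrow> real \<Rightarrow> bool" where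
  "pbnd T K \<longleftrightarrow> 0 \<le> K \<and> (\<forall>f g. T (\<lambda>x. f x + g x) = (\<lambda>x. T f x + T g x))
     \<and> (\<forall>c f. T (\<lambda>x. c * f x) = (\<lambda>x. c * T f x))
     \<and> (\<forall>f. is_l2 f \<longrightarrow> is_l2 (T f) \<and> l2norm (T f) \<le> K * l2norm f)"

definition op :: "(('a \<Rightarrow> complex) \<Rightarrow> ('a \<Rightarrow> complex)) \<Rightarrow> 'a bop" where
  "op T = Bop (Blinfun (\<lambda>u. Lvec (T (lvec u))))"

lemma lvec_eqI: "lvec a = lvec b \<Longrightarrow> a = b" by (simp add: lvec_inject)

lemma pbnd_add: "pbnd T K \<Longrightarrow> T (\<lambda>x. f x + g x) = (\<lambda>x. T f x + T g x)" by (simp add: pbnd_def)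
lemma pbnd_mult: "pbnd T K \<Longrightarrow> T (\<lambda>x. c * f x) = (\<lambda>x. c * T f x)" by (simp add: pbnd_def)
lemma pbnd_l2: "pbnd T K \<Longrightarrow> is_l2 f \<Longrightarrow> is_l2 (T f)" by (simp add: pbnd_def)
lemma pbnd_norm: "pbnd T K \<Longrightarrow> is_l2 f \<Longrightarrow> l2norm (T f) \<le> K * l2norm f" by (simp add: pbnd_def)
lemma pbnd_K: "pbnd T K \<Longrightarrow> 0 \<le> K" by (simp add: pbnd_def)

lemma op_bl:
  assumes T: "pbnd T K"
  shows "bounded_linear (\<lambda>u. Lvec (T (lvec u)))"
proof (rule bounded_linear_intro[where K=K])
  fix u v :: "'a lv" and r :: real
  show "Lvec (T (lvec (u + v))) = Lvec (T (lvec u)) + Lvec (T (lvec v))"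
    by (rule lvec_eqI) (simp add: vec_ops lvec_Lvec pbnd_l2[OF T] pbnd_add[OF T] l2_add)
  show "Lvec (T (lvec (r *\<^sub>R u))) = r *\<^sub>R Lvec (T (lvec u))"
    by (rule lvec_eqI) (simp add: vec_ops lvec_Lvec pbnd_l2[OF T] pbnd_mult[OF T] l2_cmult)
  show "norm (Lvec (T (lvec u))) \<le> norm u * K"
    using pbnd_norm[OF T, of "lvec u"] by (simp add: norm_lv_eq lvec_Lvec pbnd_l2[OF T] mult.commute)
qed

lemma app_op: "pbnd T K \<Longrightarrow> lvec (app (op T) u) = T (lvec u)"
  by (simp add: app_def op_def Bop_inverse bounded_linear_Blinfun_apply[OF op_bl] lvec_Lvec pbnd_l2)

lemma app_op_power: "pbnd T K \<Longrightarrow> lvec (app (op T ^ n) u) = (T ^^ n) (lvec u)"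
proof (induction n arbitrary: u)
  case 0 then show ?case by (simp add: app_one)
next
  case (Suc n)
  have "lvec (app (op T ^ Suc n) u) = lvec (app (op T) (app (op T ^ n) u))"
    by (simp add: app_mult)
  also have "\<dots> = T (lvec (app (op T ^ n) u))" by (rule app_op[OF Suc.prems])
  also have "\<dots> = (T ^^ Suc n) (lvec u)" using Suc by simp
  finally show ?case .
qed

lemma pbnd_i: assumes T: "pbnd T K" shows "pbnd (\<lambda>g y. \<i> * T g y) K"
  unfolding pbnd_def
proof (intro conjI allI impI)
  show "0 \<le> K" using pbnd_K[OF T] .
  fix f g :: "'a \<Rightarrow> complex" and c
  show "(\<lambda>y. \<i> * T (\<lambda>x. f x + g x) y) = (\<lambda>x. \<i> * T f x + \<i> * T g x)"
    by (simp add: pbnd_add[OF T] algebra_simps)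
  show "(\<lambda>y. \<i> * T (\<lambda>x. c * f x) y) = (\<lambda>x. c * (\<i> * T f x))"
    by (simp add: pbnd_mult[OF T] algebra_simps)
  assume f: "is_l2 f"
  show "is_l2 (\<lambda>y. \<i> * T f y)" using l2_cmult[OF pbnd_l2[OF T f], of \<i>] by simp
  show "l2norm (\<lambda>y. \<i> * T f y) \<le> K * l2norm f" using l2_cmult[OF pbnd_l2[OF T f], of \<i>] pbnd_norm[OF T f] by simp
qed

lemma funpow_i: assumes T: "pbnd T K"
  shows "((\<lambda>g y. \<i> * T g y) ^^ n) f = (\<lambda>y. \<i>^n * (T ^^ n) f y)"
proof (induction n)
  case 0 then show ?case by simp
next
  case (Suc n)
  have "((\<lambda>g y. \<i> * T g y) ^^ Suc n) f = (\<lambda>y. \<i> * T (\<lambda>y. \<i>^n * (T ^^ n) f y) y)"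
    using Suc by simp
  also have "\<dots> = (\<lambda>y. \<i>^Suc n * (T ^^ Suc n) f y)"
    by (simp add: pbnd_mult[OF T] mult.assoc)
  finally show ?case .
qed

lemma exp_point:
  assumes T: "pbnd T K" and f: "is_l2 f"
  shows "(\<lambda>n. ((\<i> * complex_of_real t)^n / of_nat (fact n)) * (T ^^ n) f x) sums
           lvec (app (exp (t *\<^sub>R op (\<lambda>g y. \<i> * T g y))) (Lvec f)) x"
proof -
  let ?Ti = "\<lambda>g y. \<i> * T g y"
  let ?B = "t *\<^sub>R op ?Ti"
  have Ti: "pbnd ?Ti K" by (rule pbnd_i[OF T])
  have s: "(\<lambda>n. ?B^n /\<^sub>R fact n) sums exp ?B"
    unfolding exp_def by (rule summable_sums[OF summable_exp_generic])
  have bl: "bounded_linear (\<lambda>A. lvec (app A (Lvec f)) x)"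
    by (rule bounded_linear_compose[OF vec_eval_bl app.bounded_linear_left])
  have s2: "(\<lambda>n. lvec (app (?B^n /\<^sub>R fact n) (Lvec f)) x) sums lvec (app (exp ?B) (Lvec f)) x"
    by (rule bounded_linear.sums[OF bl s])
  have eq: "lvec (app (?B^n /\<^sub>R fact n) (Lvec f)) x = ((\<i> * complex_of_real t)^n / of_nat (fact n)) * (T ^^ n) f x" for n
  proof -
    have "lvec (app (?B^n /\<^sub>R fact n) (Lvec f)) x = complex_of_real (t^n / fact n) * lvec (app (op ?Ti ^ n) (Lvec f)) x"
      by (simp add: app.scaleR_left vec_ops scaleR_power divide_inverse mult_ac)
    also have "\<dots> = complex_of_real (t^n / fact n) * (\<i>^n * (T ^^ n) f x)"
      by (simp add: app_op_power[OF Ti] funpow_i[OF T] lvec_Lvec f)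
    also have "\<dots> = ((\<i> * complex_of_real t)^n / of_nat (fact n)) * (T ^^ n) f x"
      by (simp add: power_mult_distrib)
    finally show ?thesis .
  qed
  show ?thesis using s2 unfolding eq .
qed



lemma l2_fin_sq: assumes "is_l2 f" "finite S"
  shows "(\<Sum>x\<in>S. (cmod (f x))^2) \<le> (l2norm f)^2"
proof -
  have "(\<Sum>x\<in>S. (cmod (f x))^2) \<le> infsum (\<lambda>x. (cmod (f x))^2) UNIV"
    by (rule finite_sum_le_infsum) (use assms in \<open>auto simp: is_l2_def\<close>)
  moreover have "0 \<le> infsum (\<lambda>x. (cmod (f x))^2) UNIV" by (simp add: infsum_nonneg)
  ultimately show ?thesis by (simp add: l2norm_def)
qed

lemma L2_set_le_from_sq: assumes "0 \<le> B" "(\<Sum>x\<in>S. (g x)^2) \<le> B^2" shows "L2_set g S \<le> B"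
  unfolding L2_set_def using assms real_sqrt_le_mono[OF assms(2)] by simp

lemma pbnd_mult_op:
  fixes q :: "'a \<Rightarrow> complex"
  assumes K: "0 \<le> K" and q: "\<And>x. cmod (q x) \<le> K"
  shows "pbnd (\<lambda>f x. q x * f x) K"
  unfolding pbnd_def
proof (intro conjI allI impI)
  fix f :: "'a \<Rightarrow> complex" assume f: "is_l2 f"
  have "is_l2 (\<lambda>x. q x * f x) \<and> l2norm (\<lambda>x. q x * f x) \<le> K * l2norm f"
    by (rule l2_dom[OF f K]) (auto simp: norm_mult intro!: mult_right_mono q)
  then show "is_l2 (\<lambda>x. q x * f x)" "l2norm (\<lambda>x. q x * f x) \<le> K * l2norm f" by auto
qed (auto simp: K algebra_simps)

lemma pbnd_sum_op:
  assumes T1: "pbnd T1 K1" and T2: "pbnd T2 K2"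
  shows "pbnd (\<lambda>f x. T1 f x + T2 f x) (K1 + K2)"
  unfolding pbnd_def
proof (intro conjI allI impI)
  show "0 \<le> K1 + K2" using pbnd_K[OF T1] pbnd_K[OF T2] by simp
  fix f g :: "'a \<Rightarrow> complex" and c
  show "(\<lambda>x. T1 (\<lambda>x. f x + g x) x + T2 (\<lambda>x. f x + g x) x) = (\<lambda>x. T1 f x + T2 f x + (T1 g x + T2 g x))"
    by (simp add: pbnd_add[OF T1] pbnd_add[OF T2] algebra_simps)
  show "(\<lambda>x. T1 (\<lambda>x. c * f x) x + T2 (\<lambda>x. c * f x) x) = (\<lambda>x. c * (T1 f x + T2 f x))"
    by (simp add: pbnd_mult[OF T1] pbnd_mult[OF T2] algebra_simps)
  assume f: "is_l2 f"
  have a: "is_l2 (\<lambda>x. T1 f x + T2 f x) \<and> l2norm (\<lambda>x. T1 f x + T2 f x) \<le> l2norm (T1 f) + l2norm (T2 f)"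
    by (rule l2_add[OF pbnd_l2[OF T1 f] pbnd_l2[OF T2 f]])
  then show "is_l2 (\<lambda>x. T1 f x + T2 f x)" by simp
  show "l2norm (\<lambda>x. T1 f x + T2 f x) \<le> (K1 + K2) * l2norm f"
    using a pbnd_norm[OF T1 f] pbnd_norm[OF T2 f] by (simp add: algebra_simps)
qed

lemma sum_sq_card: "finite A \<Longrightarrow> (\<Sum>y\<in>A. g y)^2 \<le> real (card A) * (\<Sum>y\<in>A. (g y)^2)" for g :: "'a \<Rightarrow> real"
proof -
  assume A: "finite A"
  have "\<bar>\<Sum>y\<in>A. g y\<bar> \<le> (\<Sum>y\<in>A. \<bar>g y\<bar> * \<bar>1\<bar>)" by (simp add: sum_abs)
  also have "\<dots> \<le> L2_set g A * L2_set (\<lambda>_. 1) A" by (rule L2_set_mult_ineq)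
  finally have "\<bar>\<Sum>y\<in>A. g y\<bar> \<le> L2_set g A * sqrt (real (card A))" by (simp add: L2_set_constant)
  then have "\<bar>\<Sum>y\<in>A. g y\<bar>^2 \<le> (L2_set g A * sqrt (real (card A)))^2"
    by (rule power_mono) simp
  also have "\<dots> = (\<Sum>y\<in>A. (g y)^2) * real (card A)"
    by (simp add: power_mult_distrib L2_set_def sum_nonneg)
  finally show ?thesis by (simp add: mult.commute)
qed

lemma pbnd_nbr_op:
  fixes E :: "'a \<Rightarrow> 'a \<Rightarrow> bool"
  assumes sym: "\<And>x y. E x y \<longleftrightarrow> E y x"
    and deg: "\<And>x. finite {y. E x y} \<and> card {y. E x y} \<le> D"
    and M: "0 \<le> M" and c: "\<And>x y. E x y \<Longrightarrow> cmod (c x y) \<le> M"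
  shows "pbnd (\<lambda>f x. \<Sum>y\<in>{y. E x y}. c x y * f y) (M * real D)"
  unfolding pbnd_def
proof (intro conjI allI impI)
  show "0 \<le> M * real D" using M by simp
  fix f g :: "'a \<Rightarrow> complex" and a
  show "(\<lambda>x. \<Sum>y\<in>{y. E x y}. c x y * (f y + g y)) = (\<lambda>x. (\<Sum>y\<in>{y. E x y}. c x y * f y) + (\<Sum>y\<in>{y. E x y}. c x y * g y))"
    by (simp add: algebra_simps sum.distrib)
  show "(\<lambda>x. \<Sum>y\<in>{y. E x y}. c x y * (a * f y)) = (\<lambda>x. a * (\<Sum>y\<in>{y. E x y}. c x y * f y))"
    by (simp add: sum_distrib_left algebra_simps)
next
  fix f :: "'a \<Rightarrow> complex" assume f: "is_l2 f"
  let ?N = "\<lambda>x. {y. E x y}"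
  let ?g = "\<lambda>y. (cmod (f y))^2"
  have main: "is_l2 (\<lambda>x. \<Sum>y\<in>?N x. c x y * f y) \<and> l2norm (\<lambda>x. \<Sum>y\<in>?N x. c x y * f y) \<le> M * real D * l2norm f"
  proof (rule l2_fin_bound)
    show "0 \<le> M * real D * l2norm f" using M l2norm_nonneg[of f] by simp
    fix S :: "'a set" assume S: "finite S"
    have pt: "(cmod (\<Sum>y\<in>?N x. c x y * f y))^2 \<le> M^2 * real D * (\<Sum>y\<in>?N x. ?g y)" for x
    proof -
      have "cmod (\<Sum>y\<in>?N x. c x y * f y) \<le> (\<Sum>y\<in>?N x. M * cmod (f y))"
        by (rule order_trans[OF norm_sum sum_mono]) (auto simp: norm_mult intro!: mult_right_mono c)
      then have "(cmod (\<Sum>y\<in>?N x. c x y * f y))^2 \<le> (\<Sum>y\<in>?N x. M * cmod (f y))^2"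
        by (rule power_mono) simp
      also have "\<dots> \<le> real (card (?N x)) * (\<Sum>y\<in>?N x. (M * cmod (f y))^2)"
        by (rule sum_sq_card) (use deg in auto)
      also have "\<dots> \<le> real D * (\<Sum>y\<in>?N x. (M * cmod (f y))^2)"
        by (rule mult_right_mono) (use deg[of x] in \<open>auto simp: sum_nonneg\<close>)
      also have "\<dots> = M^2 * real D * (\<Sum>y\<in>?N x. ?g y)"
        by (simp add: power_mult_distrib sum_distrib_left algebra_simps)
      finally show ?thesis .
    qed
    define T where "T = (\<Union>x\<in>S. ?N x)"
    have T: "finite T" unfolding T_def using S deg by auto
    have "(\<Sum>x\<in>S. \<Sum>y\<in>?N x. ?g y) = (\<Sum>x\<in>S. \<Sum>y\<in>{y\<in>T. E x y}. ?g y)"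
      by (rule sum.cong) (auto simp: T_def intro!: sum.cong)
    also have "\<dots> = (\<Sum>y\<in>T. \<Sum>x\<in>{x\<in>S. E x y}. ?g y)"
      by (rule sum.swap_restrict[OF S T])
    also have "\<dots> \<le> (\<Sum>y\<in>T. real D * ?g y)"
    proof (rule sum_mono)
      fix y assume "y \<in> T"
      have fin: "finite {x. E y x}" using deg by blast
      have sub: "{x\<in>S. E x y} \<subseteq> {x. E y x}" using sym by blast
      have "card {x\<in>S. E x y} \<le> card {x. E y x}" by (rule card_mono[OF fin sub])
      then have "card {x\<in>S. E x y} \<le> D" using deg[of y] by simp
      then show "(\<Sum>x\<in>{x\<in>S. E x y}. ?g y) \<le> real D * ?g y"
        by (simp add: mult_right_mono)
    qed
    also have "\<dots> \<le> real D * (l2norm f)^2"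
      using l2_fin_sq[OF f T] by (simp add: sum_distrib_left[symmetric] mult_left_mono)
    finally have sw: "(\<Sum>x\<in>S. \<Sum>y\<in>?N x. ?g y) \<le> real D * (l2norm f)^2" .
    have "(\<Sum>x\<in>S. (cmod (\<Sum>y\<in>?N x. c x y * f y))^2) \<le> (\<Sum>x\<in>S. M^2 * real D * (\<Sum>y\<in>?N x. ?g y))"
      by (rule sum_mono[OF pt])
    also have "\<dots> = M^2 * real D * (\<Sum>x\<in>S. \<Sum>y\<in>?N x. ?g y)" by (simp add: sum_distrib_left)
    also have "\<dots> \<le> M^2 * real D * (real D * (l2norm f)^2)"
      by (rule mult_left_mono[OF sw]) simp
    also have "\<dots> = (M * real D * l2norm f)^2" by (simp add: power_mult_distrib power2_eq_square)
    finally show "L2_set (\<lambda>x. cmod (\<Sum>y\<in>?N x. c x y * f y)) S \<le> M * real D * l2norm f"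
      by (rule L2_set_le_from_sq[rotated]) (use M l2norm_nonneg[of f] in simp)
  qed
  then show "is_l2 (\<lambda>x. \<Sum>y\<in>?N x. c x y * f y)" "l2norm (\<lambda>x. \<Sum>y\<in>?N x. c x y * f y) \<le> M * real D * l2norm f"
    by auto
qed



lemma gdist_step:
  assumes connected: "\<And>x y. \<exists>n. (E ^^ n) x y" and e: "E x y"
  shows "gdist E x p \<le> gdist E y p + 1"
proof -
  have "(E ^^ gdist E y p) y p" unfolding gdist_def by (rule LeastI_ex) (rule connected)
  then have "(E ^^ Suc (gdist E y p)) x p" by (rule relpowp_Suc_I2[where P=E, OF e])
  then show ?thesis unfolding gdist_def by (simp add: Least_le)
qed

lemma w_ratio:
  assumes connected: "\<And>x y. \<exists>n. (E ^^ n) x y" and e: "E x y"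
  shows "(1 + real (gdist E x p))^m \<le> 2^m * (1 + real (gdist E y p))^m"
proof -
  have "1 + real (gdist E x p) \<le> 2 * (1 + real (gdist E y p))"
    using gdist_step[OF connected e, of p] by simp
  then have "(1 + real (gdist E x p))^m \<le> (2 * (1 + real (gdist E y p)))^m"
    by (rule power_mono) simp
  then show ?thesis by (simp only: power_mult_distrib)
qed

lemma funpow_homog: assumes T: "pbnd T K"
  shows "(T ^^ n) (\<lambda>x. a * f x) = (\<lambda>x. a * (T ^^ n) f x)"
  by (induction n) (simp_all add: pbnd_mult[OF T])

lemma evol_U:
  assumes H: "pbnd (ham E V) K" and f: "is_l2 f"
  shows "evol E V t f = lvec (app (exp (t *\<^sub>R op (\<lambda>g y. \<i> * ham E V g y))) (Lvec f))"
  unfolding evol_def by (rule ext) (rule sums_unique[OF exp_point[OF H f], symmetric])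

lemma evol_mult:
  assumes H: "pbnd (ham E V) K" and f: "is_l2 f"
  shows "evol E V t (\<lambda>x. a * f x) = (\<lambda>x. a * evol E V t f x)"
proof (rule ext)
  fix x
  have "(\<lambda>n. a * (((\<i> * complex_of_real t)^n / of_nat (fact n)) * (ham E V ^^ n) f x)) sums
        (a * lvec (app (exp (t *\<^sub>R op (\<lambda>g y. \<i> * ham E V g y))) (Lvec f)) x)"
    by (rule sums_mult[OF exp_point[OF H f]])
  then have "(\<lambda>n. ((\<i> * complex_of_real t)^n / of_nat (fact n)) * (ham E V ^^ n) (\<lambda>x. a * f x) x) sums
        (a * evol E V t f x)"
    by (simp add: funpow_homog[OF H] evol_U[OF H f] mult_ac)
  then show "evol E V t (\<lambda>x. a * f x) x = a * evol E V t f x"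
    unfolding evol_def by (rule sums_unique[symmetric])
qed

lemma hw_pow:
  assumes hw: "\<And>g. hw g = (\<lambda>x. complex_of_real (w x) * ham E V (\<lambda>y. g y / complex_of_real (w y)) x)"
    and w: "\<And>x. w x \<noteq> 0"
  shows "(hw ^^ n) (\<lambda>x. complex_of_real (w x) * f x) = (\<lambda>x. complex_of_real (w x) * (ham E V ^^ n) f x)"
proof (induction n)
  case 0 then show ?case by simp
next
  case (Suc n)
  have e: "(\<lambda>y. complex_of_real (w y) * (ham E V ^^ n) f y / complex_of_real (w y)) = (ham E V ^^ n) f"
    using w by (auto simp: fun_eq_iff)
  show ?case using Suc by (simp only: funpow.simps comp_apply hw e)
qed

lemma evol_Uw:
  assumes HW: "pbnd hw K"
    and hw: "\<And>g. hw g = (\<lambda>x. complex_of_real (w x) * ham E V (\<lambda>y. g y / complex_of_real (w y)) x)"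
    and w: "\<And>x. w x \<noteq> 0"
    and f: "is_l2 (\<lambda>x. complex_of_real (w x) * f x)"
  shows "evol E V t f x = lvec (app (exp (t *\<^sub>R op (\<lambda>g y. \<i> * hw g y))) (Lvec (\<lambda>x. complex_of_real (w x) * f x))) x / complex_of_real (w x)"
proof -
  have "(\<lambda>n. ((\<i> * complex_of_real t)^n / of_nat (fact n)) * (hw ^^ n) (\<lambda>x. complex_of_real (w x) * f x) x / complex_of_real (w x)) sums
         (lvec (app (exp (t *\<^sub>R op (\<lambda>g y. \<i> * hw g y))) (Lvec (\<lambda>x. complex_of_real (w x) * f x))) x / complex_of_real (w x))"
    by (rule sums_divide[OF exp_point[OF HW f]])
  then have "(\<lambda>n. ((\<i> * complex_of_real t)^n / of_nat (fact n)) * (ham E V ^^ n) f x) sums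
         (lvec (app (exp (t *\<^sub>R op (\<lambda>g y. \<i> * hw g y))) (Lvec (\<lambda>x. complex_of_real (w x) * f x))) x / complex_of_real (w x))"
    by (simp add: hw_pow[OF hw w] w)
  then show ?thesis unfolding evol_def by (rule sums_unique[symmetric])
qed



lemma one_plus_pow_le: "0 \<le> d \<Longrightarrow> (1 + d)^m \<le> 2^m * (1 + d^m)" for d :: real
proof (cases "d \<le> 1")
  case True
  assume d: "0 \<le> d"
  have "(1 + d)^m \<le> 2^m" by (rule power_mono) (use True d in auto)
  also have "\<dots> \<le> 2^m * (1 + d^m)" using d by simp
  finally show ?thesis .
next
  case False
  assume d: "0 \<le> d"
  have "(1 + d)^m \<le> (2 * d)^m" by (rule power_mono) (use False d in auto)
  also have "\<dots> = 2^m * d^m" by (simp add: power_mult_distrib)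
  also have "\<dots> \<le> 2^m * (1 + d^m)" by simp
  finally show ?thesis .
qed

theorem corollaryA2:
  fixes E :: "'v::countable \<Rightarrow> 'v \<Rightarrow> bool" and V :: "'v \<Rightarrow> real"
    and D :: nat and p :: 'v and m :: nat and \<psi> :: "'v \<Rightarrow> complex"
  assumes sym: "\<And>x y. E x y \<longleftrightarrow> E y x"
    and irrefl: "\<And>x. \<not> E x x"
    and connected: "\<And>x y. \<exists>n. (E ^^ n) x y"
    and deg: "\<And>x. finite {y. E x y} \<and> card {y. E x y} \<le> D"
    and Vbdd: "\<exists>C. \<forall>x. \<bar>V x\<bar> \<le> C"
    and psi: "is_l2 \<psi>"
    and xpsi: "is_l2 (xpow E p m \<psi>)"
  shows "\<forall>t\<ge>0.
           is_l2 (xt E V p m t \<psi>)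
         \<and> ((\<lambda>s. l2norm (\<lambda>x. xt E V p m s \<psi> x - xt E V p m t \<psi> x)) \<longlongrightarrow> 0) (at t within {0..})
         \<and> is_l2 (\<lambda>x. \<i> * evol E V t (comm_Ax E p m (evol E V (-t) \<psi>)) x)
         \<and> ((\<lambda>s. l2norm (\<lambda>x. (xt E V p m s \<psi> x - xt E V p m t \<psi> x) / complex_of_real (s - t)
                              - \<i> * evol E V t (comm_Ax E p m (evol E V (-t) \<psi>)) x))
              \<longlongrightarrow> 0) (at t within {0..})"
proof -
  obtain C where C: "\<And>x. \<bar>V x\<bar> \<le> C" using Vbdd by blast
  have C0: "0 \<le> C" using C[of p] by simp
  have HA: "pbnd (ham E V) (1 * real D + C)"
  proof -
    have e: "ham E V = (\<lambda>f x. (\<Sum>y\<in>{y. E x y}. (\<lambda>x y. 1) x y * f y) + complex_of_real (V x) * f x)"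
      by (auto simp: fun_eq_iff ham_def adj_op_def)
    show ?thesis unfolding e
      by (rule pbnd_sum_op[OF pbnd_nbr_op[OF sym deg] pbnd_mult_op]) (use C C0 in auto)
  qed
  define w where "w = (\<lambda>x. (1 + real (gdist E x p))^m)"
  have wpos: "\<And>x. 0 < w x" by (simp add: w_def)
  have wne: "\<And>x. w x \<noteq> 0" using wpos by (metis less_irrefl)
  define hw where "hw = (\<lambda>g. \<lambda>x. complex_of_real (w x) * ham E V (\<lambda>y. g y / complex_of_real (w y)) x)"
  have hw_eq: "\<And>g. hw g = (\<lambda>x. complex_of_real (w x) * ham E V (\<lambda>y. g y / complex_of_real (w y)) x)"
    by (simp add: hw_def)
  have HW: "pbnd hw (2^m * real D + C)"
  proof -
    have e: "hw = (\<lambda>f x. (\<Sum>y\<in>{y. E x y}. (\<lambda>x y. complex_of_real (w x / w y)) x y * f y) + complex_of_real (V x) * f x)"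
    proof (intro ext)
      fix f x
      have "complex_of_real (w x) * (\<Sum>y\<in>{y. E x y}. f y / complex_of_real (w y)) = (\<Sum>y\<in>{y. E x y}. complex_of_real (w x / w y) * f y)"
        by (simp add: sum_distrib_left)
      then show "hw f x = (\<Sum>y\<in>{y. E x y}. (\<lambda>x y. complex_of_real (w x / w y)) x y * f y) + complex_of_real (V x) * f x"
        using wne[of x] by (simp add: hw_def ham_def adj_op_def distrib_left)
    qed
    have r: "cmod (complex_of_real (w x / w y)) \<le> 2^m" if "E x y" for x y
    proof -
      have "w x \<le> 2^m * w y" unfolding w_def by (rule w_ratio[OF connected that])
      then have "w x / w y \<le> 2^m" using wpos[of y] by (simp add: pos_divide_le_eq)
      moreover have "0 \<le> w x / w y" using wpos[of x] wpos[of y] by simp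
      ultimately show ?thesis by (simp only: norm_of_real)
    qed
    show ?thesis unfolding e
      by (rule pbnd_sum_op[OF pbnd_nbr_op[OF sym deg] pbnd_mult_op]) (use C C0 r in auto)
  qed
  define q where "q = (\<lambda>x. complex_of_real (real (gdist E x p)^m / w x))"
  have MQ: "pbnd (\<lambda>f x. q x * f x) 1"
  proof (rule pbnd_mult_op)
    fix x
    have "real (gdist E x p)^m \<le> w x" unfolding w_def by (rule power_mono) auto
    then have "real (gdist E x p)^m / w x \<le> 1" "0 \<le> real (gdist E x p)^m / w x" using wpos[of x] by simp_all
    then show "cmod (q x) \<le> 1" unfolding q_def by (simp only: norm_of_real)
  qed simp
  have wpsi: "is_l2 (\<lambda>x. complex_of_real (w x) * \<psi> x)"
  proof -
    define h where "h = (\<lambda>x. complex_of_real (cmod (\<psi> x)) + complex_of_real (cmod (xpow E p m \<psi> x)))"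
    have a: "is_l2 (\<lambda>x. complex_of_real (cmod (\<psi> x)))"
      using l2_dom[OF psi, of 1 "\<lambda>x. complex_of_real (cmod (\<psi> x))"] by simp
    have b: "is_l2 (\<lambda>x. complex_of_real (cmod (xpow E p m \<psi> x)))"
      using l2_dom[OF xpsi, of 1 "\<lambda>x. complex_of_real (cmod (xpow E p m \<psi> x))"] by simp
    have h: "is_l2 h" unfolding h_def using l2_add[OF a b] by simp
    have "cmod (complex_of_real (w x) * \<psi> x) \<le> 2^m * cmod (h x)" for x
    proof -
      have ch: "cmod (h x) = cmod (\<psi> x) + real (gdist E x p)^m * cmod (\<psi> x)"
      proof -
        have "h x = complex_of_real (cmod (\<psi> x) + real (gdist E x p)^m * cmod (\<psi> x))"
          unfolding h_def xpow_def by (simp add: norm_mult norm_power)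
        then show ?thesis by (simp only: norm_of_real) simp
      qed
      have "cmod (complex_of_real (w x) * \<psi> x) = w x * cmod (\<psi> x)" using wpos[of x] by (simp add: norm_mult)
      also have "\<dots> \<le> (2^m * (1 + real (gdist E x p)^m)) * cmod (\<psi> x)"
        unfolding w_def by (rule mult_right_mono[OF one_plus_pow_le]) auto
      also have "\<dots> = 2^m * cmod (h x)" by (simp add: ch algebra_simps)
      finally show ?thesis .
    qed
    then show ?thesis using l2_dom[OF h, of "2^m"] by simp
  qed
  define Psi where "Psi = Lvec (\<lambda>x. complex_of_real (w x) * \<psi> x)"
  define Hop where "Hop = op (\<lambda>g y. \<i> * ham E V g y)"
  define Hwop where "Hwop = op (\<lambda>g y. \<i> * hw g y)"
  define Mq where "Mq = op (\<lambda>f x. q x * f x)"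
  define U where "U = (\<lambda>s. exp (s *\<^sub>R Hop))"
  define Wf where "Wf = (\<lambda>s. exp (s *\<^sub>R (- Hwop)))"
  have phi: "evol E V (-s) \<psi> x = lvec (app (Wf s) Psi) x / complex_of_real (w x)" for s x
    using evol_Uw[OF HW hw_eq wne wpsi, of "-s" x] by (simp add: Wf_def Psi_def Hwop_def)
  define Y where "Y = (\<lambda>s. app Mq (app (Wf s) Psi))"
  have Yv: "lvec (Y s) = xpow E p m (evol E V (-s) \<psi>)" for s
  proof (rule ext)
    fix x
    show "lvec (Y s) x = xpow E p m (evol E V (-s) \<psi>) x"
      unfolding Y_def Mq_def app_op[OF MQ] unfolding xpow_def phi q_def
      using wne[of x] by (simp add: field_simps)
  qed
  define Z where "Z = (\<lambda>s. app (U s) (Y s))"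
  have xtZ: "xt E V p m s \<psi> = lvec (Z s)" for s
    unfolding xt_def Yv[symmetric] Z_def U_def Hop_def
    by (simp add: evol_U[OF HA vec_l2] lvec_inverse)
  have MQi: "pbnd (\<lambda>g y. \<i> * hw g y) (2^m * real D + C)" by (rule pbnd_i[OF HW])
  have HAi: "pbnd (\<lambda>g y. \<i> * ham E V g y) (1 * real D + C)" by (rule pbnd_i[OF HA])
  show ?thesis
  proof (intro allI impI)
    fix t :: real assume "0 \<le> t"
    let ?F = "at t within {0::real..}"
    define \<phi> where "\<phi> = evol E V (-t) \<psi>"
    define R where "R = app (Wf t) Psi"
    have Rv: "lvec R = (\<lambda>x. complex_of_real (w x) * \<phi> x)"
      unfolding R_def \<phi>_def phi using wne by (auto simp: fun_eq_iff)
    have dU: "(U has_vector_derivative U t * Hop) ?F"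
      unfolding U_def by (rule exp_scaleR_has_vector_derivative_right)
    have dW: "(Wf has_vector_derivative Wf t * (- Hwop)) ?F"
      unfolding Wf_def by (rule exp_scaleR_has_vector_derivative_right)
    have bl: "bounded_linear (\<lambda>A. app Mq (app A Psi))"
      by (rule bounded_linear_compose[OF app.bounded_linear_right app.bounded_linear_left])
    define Y' where "Y' = app Mq (app (Wf t * (- Hwop)) Psi)"
    have dY: "(Y has_vector_derivative Y') ?F"
      unfolding Y_def Y'_def by (rule bounded_linear.has_vector_derivative[OF bl dW])
    define Z' where "Z' = app (U t) Y' + app (U t * Hop) (Y t)"
    have dZ: "(Z has_vector_derivative Z') ?F"
      unfolding Z_def Z'_def by (rule app.has_vector_derivative[OF dU dY])
    have comm: "Wf t * (- Hwop) = (- Hwop) * Wf t"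
      unfolding Wf_def by (rule exp_times_scaleR_commute)
    have Y'e: "Y' = - app Mq (app Hwop R)"
      unfolding Y'_def comm R_def by (simp add: app_mult app.minus_left app.minus_right)
    define G where "G = (\<lambda>x. \<i> * comm_Ax E p m \<phi> x)"
    have hwR: "hw (lvec R) = (\<lambda>x. complex_of_real (w x) * ham E V \<phi> x)"
    proof -
      have "(\<lambda>y. complex_of_real (w y) * \<phi> y / complex_of_real (w y)) = \<phi>"
        using wne by (auto simp: fun_eq_iff)
      then show ?thesis unfolding Rv hw_def by simp
    qed
    have v1: "lvec (app Mq (app Hwop R)) = (\<lambda>x. \<i> * xpow E p m (ham E V \<phi>) x)"
      unfolding Mq_def Hwop_def app_op[OF MQ] app_op[OF MQi] hwR
      unfolding q_def xpow_def using wne by (auto simp: fun_eq_iff)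
    have v2: "lvec (app Hop (Y t)) = (\<lambda>x. \<i> * ham E V (xpow E p m \<phi>) x)"
      unfolding Hop_def app_op[OF HAi] Yv \<phi>_def ..
    have vG: "lvec (app Hop (Y t) - app Mq (app Hwop R)) = G"
      unfolding vec_ops v1 v2 G_def
      by (auto simp: fun_eq_iff ham_def xpow_def comm_Ax_def algebra_simps)
    have Gl2: "is_l2 G" using vec_l2[of "app Hop (Y t) - app Mq (app Hwop R)"] vG by simp
    have cl2: "is_l2 (comm_Ax E p m \<phi>)"
      using l2_cmult[OF Gl2, of "- \<i>"] by (simp add: G_def)
    have Z'e: "Z' = app (U t) (Lvec G)"
    proof -
      have "Z' = app (U t) (app Hop (Y t) - app Mq (app Hwop R))"
        unfolding Z'_def Y'e by (simp add: app_mult app.minus_right app.diff_right)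
      also have "app Hop (Y t) - app Mq (app Hwop R) = Lvec G"
        using vG by (metis lvec_inverse)
      finally show ?thesis .
    qed
    have Z'v: "lvec Z' = (\<lambda>x. \<i> * evol E V t (comm_Ax E p m (evol E V (-t) \<psi>)) x)"
    proof -
      have "lvec Z' = evol E V t G"
        unfolding Z'e U_def Hop_def by (rule evol_U[OF HA Gl2, symmetric])
      also have "\<dots> = (\<lambda>x. \<i> * evol E V t (comm_Ax E p m \<phi>) x)"
        unfolding G_def by (rule evol_mult[OF HA cl2])
      finally show ?thesis by (simp add: \<phi>_def)
    qed
    have cont: "(Z \<longlongrightarrow> Z t) ?F"
      using has_vector_derivative_continuous[OF dZ] by (simp add: continuous_within)
    have t1: "((\<lambda>s. l2norm (\<lambda>x. xt E V p m s \<psi> x - xt E V p m t \<psi> x)) \<longlongrightarrow> 0) ?F"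
    proof -
      have "((\<lambda>s. norm (Z s - Z t)) \<longlongrightarrow> 0) ?F"
        by (rule tendsto_norm_zero[OF LIM_zero[OF cont]])
      moreover have "norm (Z s - Z t) = l2norm (\<lambda>x. xt E V p m s \<psi> x - xt E V p m t \<psi> x)" for s
        by (simp add: norm_lv_eq xtZ vec_ops)
      ultimately show ?thesis by simp
    qed
    have t2: "((\<lambda>s. l2norm (\<lambda>x. (xt E V p m s \<psi> x - xt E V p m t \<psi> x) / complex_of_real (s - t)
                              - \<i> * evol E V t (comm_Ax E p m (evol E V (-t) \<psi>)) x)) \<longlongrightarrow> 0) ?F"
    proof -
      have "((\<lambda>y. (Z y - Z t - (y - t) *\<^sub>R Z') /\<^sub>R norm (y - t)) \<longlongrightarrow> 0) ?F"
        using dZ unfolding has_vector_derivative_def has_derivative_at_within by simp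
      then have lim: "((\<lambda>y. norm ((Z y - Z t - (y - t) *\<^sub>R Z') /\<^sub>R norm (y - t))) \<longlongrightarrow> 0) ?F"
        by (rule tendsto_norm_zero)
      have ev: "\<forall>\<^sub>F y in ?F. norm ((Z y - Z t - (y - t) *\<^sub>R Z') /\<^sub>R norm (y - t)) =
          l2norm (\<lambda>x. (xt E V p m y \<psi> x - xt E V p m t \<psi> x) / complex_of_real (y - t)
                              - \<i> * evol E V t (comm_Ax E p m (evol E V (-t) \<psi>)) x)"
      proof -
        have "norm ((Z y - Z t - (y - t) *\<^sub>R Z') /\<^sub>R norm (y - t)) =
          l2norm (\<lambda>x. (xt E V p m y \<psi> x - xt E V p m t \<psi> x) / complex_of_real (y - t)
                              - \<i> * evol E V t (comm_Ax E p m (evol E V (-t) \<psi>)) x)" if yt: "y \<noteq> t" for y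
        proof -
          have "Z y - Z t - (y - t) *\<^sub>R Z' = (y - t) *\<^sub>R ((1 / (y - t)) *\<^sub>R (Z y - Z t) - Z')"
            using yt by (simp add: scaleR_diff_right)
          then have "norm ((Z y - Z t - (y - t) *\<^sub>R Z') /\<^sub>R norm (y - t)) = norm ((1 / (y - t)) *\<^sub>R (Z y - Z t) - Z')"
            using yt by (simp add: abs_mult)
          also have "\<dots> = l2norm (\<lambda>x. (xt E V p m y \<psi> x - xt E V p m t \<psi> x) / complex_of_real (y - t)
                              - \<i> * evol E V t (comm_Ax E p m (evol E V (-t) \<psi>)) x)"
            unfolding norm_lv_eq vec_ops Z'v xtZ by (simp add: divide_inverse mult.commute)
          finally show ?thesis .
        qed
        then show ?thesis by (auto simp: eventually_at_filter)
      qed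
      show ?thesis by (rule Lim_transform_eventually[OF lim ev])
    qed
    show "is_l2 (xt E V p m t \<psi>)
         \<and> ((\<lambda>s. l2norm (\<lambda>x. xt E V p m s \<psi> x - xt E V p m t \<psi> x)) \<longlongrightarrow> 0) ?F
         \<and> is_l2 (\<lambda>x. \<i> * evol E V t (comm_Ax E p m (evol E V (-t) \<psi>)) x)
         \<and> ((\<lambda>s. l2norm (\<lambda>x. (xt E V p m s \<psi> x - xt E V p m t \<psi> x) / complex_of_real (s - t)
                              - \<i> * evol E V t (comm_Ax E p m (evol E V (-t) \<psi>)) x))
              \<longlongrightarrow> 0) ?F"
      using t1 t2 vec_l2[of "Z t"] vec_l2[of Z'] by (simp add: xtZ Z'v)
  qed
qed


end
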